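(* Let $\alpha:=\frac{\sqrt{e^2+4}-e}{2e}\approx0.2178$. For $x\in[0,1]$, $y\ge0$ with $a:=|x-y|\le\alpha$, we have \[ |x\log x-y\log y|\le -a\log a, \] with the convention $0\log0=0$. *)

theory Defs
  imports "HOL-Analysis.Analysis"
begin

end

theory Submission
  imports Defs
begin

lemma alpha_le: "(sqrt (exp 1 ^ 2 + 4) - exp 1) / (2 * exp 1) \<le> (1/4::real)"
proof -
  have e: "exp (1::real) \<ge> 2" using exp_ge_add_one_self[of 1] by simp
  have "exp 1 ^ 2 + 4 \<le> (3/2 * exp (1::real))^2" using e
  proof -
    have "exp (1::real) * exp 1 \<ge> 2 * 2" using e by (intro mult_mono) auto
    thus ?thesis by (simp add: power2_eq_square algebra_simps)
  qed
  hence "sqrt (exp 1 ^ 2 + 4) \<le> 3/2 * exp (1::real)"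
    using e real_sqrt_le_mono by fastforce
  thus ?thesis using e by (simp add: divide_simps)
qed

lemma ln_small: assumes "0 < a" "a \<le> (1/4::real)" shows "ln a \<le> - (1 + a)"
proof -
  have "exp (-1/4::real) \<ge> 3/4" using exp_ge_add_one_self[of "-1/4::real"] by simp
  hence "exp (1/4::real) \<le> 4/3" by (simp add: exp_minus field_simps)
  moreover have "exp (5/4::real) = exp 1 * exp (1/4)" by (simp flip: exp_add)
  ultimately have "exp (5/4::real) \<le> 3 * (4/3)" using exp_le
  proof -
    have "exp 1 * exp (1/4::real) \<le> 3 * (4/3)" using exp_le \<open>exp (1/4::real) \<le> 4/3\<close>
      by (intro mult_mono) auto
    thus ?thesis using \<open>exp (5/4::real) = _\<close> by simp
  qed
  hence "exp (-(5/4)::real) \<ge> 1/4" by (simp add: exp_minus field_simps)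
  moreover have "exp (-(1+a)) \<ge> exp (-(5/4))" using assms by simp
  ultimately have "exp (-(1+a)) \<ge> a" using assms by linarith
  thus ?thesis using assms by (metis exp_le_cancel_iff exp_ln)
qed

lemma main:
  fixes s a :: real
  assumes "0 < s" "s \<le> 1" "0 < a" "a \<le> 1/4"
  shows "\<bar>(s+a) * ln (s+a) - s * ln s\<bar> \<le> - a * ln a"
proof -
  have l1: "ln (s+a) \<ge> ln s" "ln (s+a) \<ge> ln a" using assms by auto
  have lower: "(s+a) * ln (s+a) - s * ln s \<ge> a * ln a"
  proof -
    have "s * ln (s+a) \<ge> s * ln s" using l1 assms by (simp add: mult_left_mono)
    moreover have "a * ln (s+a) \<ge> a * ln a" using l1 assms by (simp add: mult_left_mono)
    ultimately show ?thesis by (simp add: algebra_simps)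
  qed
  have "ln (s+a) - ln s = ln ((s+a)/s)" using assms by (simp add: ln_div)
  also have "\<dots> \<le> (s+a)/s - 1" using assms by (intro ln_le_minus_one) auto
  also have "\<dots> = a / s" using assms by (simp add: field_simps)
  finally have "s * (ln (s+a) - ln s) \<le> s * (a/s)" using assms by (intro mult_left_mono) auto
  hence u1: "s * (ln (s+a) - ln s) \<le> a" using assms by simp
  have "ln (s+a) \<le> s + a - 1" using assms by (intro ln_le_minus_one) auto
  hence u2: "a * ln (s+a) \<le> a * a" using assms mult_left_mono[of "ln (s+a)" "s+a-1" a] by (simp add: algebra_simps)
  have "(s+a) * ln (s+a) - s * ln s = s * (ln (s+a) - ln s) + a * ln (s+a)"
    by (simp add: algebra_simps)
  also have "\<dots> \<le> a * (1 + a)" using u1 u2 by (simp add: algebra_simps)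
  also have "\<dots> \<le> a * (- ln a)" using ln_small[OF assms(3,4)] assms by (intro mult_left_mono) auto
  finally have upper: "(s+a) * ln (s+a) - s * ln s \<le> - a * ln a" by simp
  show ?thesis using lower upper by auto
qed

lemma main2:
  fixes s a :: real
  assumes "0 \<le> s" "s \<le> 1" "0 \<le> a" "a \<le> 1/4"
  shows "\<bar>(s+a) * ln (s+a) - s * ln s\<bar> \<le> - a * ln a"
proof (cases "s = 0 \<or> a = 0")
  case True
  moreover have "a * ln a \<le> 0" using assms
    by (cases "a = 0") (auto intro: mult_nonneg_nonpos simp: ln_le_zero_iff)
  ultimately show ?thesis by auto
next
  case False
  thus ?thesis using main assms by auto
qed

theorem lemma5:
  fixes x y :: real
  defines "\<alpha> \<equiv> (sqrt (exp 1 ^ 2 + 4) - exp 1) / (2 * exp 1)"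
  assumes "0 \<le> x" "x \<le> 1" "0 \<le> y" "\<bar>x - y\<bar> \<le> \<alpha>"
  shows "\<bar>x * ln x - y * ln y\<bar> \<le> - \<bar>x - y\<bar> * ln \<bar>x - y\<bar>"
proof -
  have a: "\<bar>x - y\<bar> \<le> 1/4" using assms(5) alpha_le unfolding \<alpha>_def by linarith
  show ?thesis
  proof (cases "x \<le> y")
    case True
    have "\<bar>(x + (y-x)) * ln (x + (y-x)) - x * ln x\<bar> \<le> - (y-x) * ln (y-x)"
      using main2[of x "y-x"] True a assms by auto
    thus ?thesis using True by (simp add: abs_minus_commute)
  next
    case False
    have "\<bar>(y + (x-y)) * ln (y + (x-y)) - y * ln y\<bar> \<le> - (x-y) * ln (x-y)"
      using main2[of y "x-y"] False a assms by auto
    thus ?thesis using False by simp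
  qed
qed

end
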